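(* Let $G$ be a connected graph with a cut vertex, let $\mathcal B$ and $C$ be the sets of blocks and cut vertices of $G$, respectively, and let $T$ be the block tree of $G$. Then $G$ is $1$-perfectly orientable if and only if one of the following conditions holds: (1) There exists a block $B_r$ of $G$ such that $B_r$ is $1$-perfectly orientable and for every arc $(B,v)\in\mathcal B\times C$ of the $B_r$-rooted orientation of $T$, the rooted graph $B^v$ is $1$-perfectly orientable. (2) There exists a cut vertex $v_r$ of $G$ such that for every arc $(B,v)\in\mathcal B\times C$ of the $v_r$-rooted orientation of $T$, the rooted graph $B^v$ is $1$-perfectly orientable.
   Context: All graphs are finite and simple. An orientation of $G$ is $1$-perfect if for every vertex the out-neighborhood is a clique in $G$; $G$ is $1$-perfectly orientable if it has a $1$-perfect orientation. A sink is a vertex of out-degree $0$. A rooted graph $B^v$ is a pair $(B,v)$ with $v\in V(B)$; it is $1$-perfectly orientable if $B$ has a $1$-perfect orientation in which $v$ is a sink. A graph is biconnected if it is connected and has no cut vertex; a block is a maximal biconnected subgraph. The block tree $T$ of a connected graph $G$ has vertex set $\mathcal B\cup C$, with a block $B$ adjacent to a cut vertex $v$ iff $v\in V(B)$. For a tree $T$ and a vertex $r$ of $T$, the $r$-rooted orientation of $T$ is the orientation in which every edge $\{x,y\}$ is oriented $x\to y$ iff $d_T(y,r)<d_T(x,r)$ (all edges point towards $r$). *)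

theory Defs
  imports Main
begin

definition graph :: "'a set \<Rightarrow> 'a set set \<Rightarrow> bool" where
  "graph V E \<longleftrightarrow> finite V \<and> (\<forall>e\<in>E. e \<subseteq> V \<and> card e = 2)"

definition adj_rel :: "'a set set \<Rightarrow> ('a \<times> 'a) set" where
  "adj_rel E = {(x, y). {x, y} \<in> E}"

definition connected_graph :: "'a set \<Rightarrow> 'a set set \<Rightarrow> bool" where
  "connected_graph V E \<longleftrightarrow> V \<noteq> {} \<and> (\<forall>x\<in>V. \<forall>y\<in>V. (x, y) \<in> (adj_rel E)\<^sup>*)"

definition components :: "'a set \<Rightarrow> 'a set set \<Rightarrow> 'a set set" where
  "components V E = V // {(x, y). x \<in> V \<and> y \<in> V \<and> (x, y) \<in> (adj_rel E)\<^sup>*}"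

definition del_vertex_E :: "'a set set \<Rightarrow> 'a \<Rightarrow> 'a set set" where
  "del_vertex_E E v = {e \<in> E. v \<notin> e}"

definition cut_vertex :: "'a set \<Rightarrow> 'a set set \<Rightarrow> 'a \<Rightarrow> bool" where
  "cut_vertex V E v \<longleftrightarrow> v \<in> V \<and>
     card (components (V - {v}) (del_vertex_E E v)) > card (components V E)"

definition biconnected :: "'a set \<Rightarrow> 'a set set \<Rightarrow> bool" where
  "biconnected V E \<longleftrightarrow> connected_graph V E \<and> \<not> (\<exists>v. cut_vertex V E v)"

definition subgraph :: "'a set \<Rightarrow> 'a set set \<Rightarrow> 'a set \<Rightarrow> 'a set set \<Rightarrow> bool" where
  "subgraph V' E' V E \<longleftrightarrow> V' \<subseteq> V \<and> E' \<subseteq> E \<and> graph V' E'"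

definition is_block :: "'a set \<Rightarrow> 'a set set \<Rightarrow> 'a set \<times> 'a set set \<Rightarrow> bool" where
  "is_block V E B \<longleftrightarrow> subgraph (fst B) (snd B) V E \<and> biconnected (fst B) (snd B) \<and>
     (\<forall>V'' E''. subgraph V'' E'' V E \<and> biconnected V'' E'' \<and> fst B \<subseteq> V'' \<and> snd B \<subseteq> E''
        \<longrightarrow> V'' = fst B \<and> E'' = snd B)"

definition orientation :: "'a set set \<Rightarrow> ('a \<times> 'a) set \<Rightarrow> bool" where
  "orientation E D \<longleftrightarrow> (\<forall>(x, y)\<in>D. {x, y} \<in> E) \<and>
     (\<forall>x y. {x, y} \<in> E \<longrightarrow> ((x, y) \<in> D \<longleftrightarrow> (y, x) \<notin> D))"

definition one_perfect :: "'a set \<Rightarrow> 'a set set \<Rightarrow> ('a \<times> 'a) set \<Rightarrow> bool" where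
  "one_perfect V E D \<longleftrightarrow> orientation E D \<and>
     (\<forall>v\<in>V. \<forall>x y. (v, x) \<in> D \<and> (v, y) \<in> D \<and> x \<noteq> y \<longrightarrow> {x, y} \<in> E)"

definition one_perfectly_orientable :: "'a set \<Rightarrow> 'a set set \<Rightarrow> bool" where
  "one_perfectly_orientable V E \<longleftrightarrow> (\<exists>D. one_perfect V E D)"

text \<open>Rooted graph B^v is 1-perfectly orientable: a 1-perfect orientation with v a sink.\<close>
definition rooted_one_perfectly_orientable :: "'a set \<Rightarrow> 'a set set \<Rightarrow> 'a \<Rightarrow> bool" where
  "rooted_one_perfectly_orientable V E v \<longleftrightarrow>
     v \<in> V \<and> (\<exists>D. one_perfect V E D \<and> (\<forall>x. (v, x) \<notin> D))"

definition block_tree :: "'a set \<Rightarrow> 'a set set \<Rightarrow>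
    (('a set \<times> 'a set set) + 'a) set \<times> ((('a set \<times> 'a set set) + 'a) \<times> (('a set \<times> 'a set set) + 'a)) set" where
  "block_tree V E =
    (Inl ` {B. is_block V E B} \<union> Inr ` {v. cut_vertex V E v},
     (let A = {(Inl B, Inr v) | B v. is_block V E B \<and> cut_vertex V E v \<and> v \<in> fst B}
      in A \<union> A\<inverse>))"

definition dist_rel :: "('b \<times> 'b) set \<Rightarrow> 'b \<Rightarrow> 'b \<Rightarrow> nat" where
  "dist_rel R x y = (LEAST n. (x, y) \<in> R ^^ n)"

definition rooted_arc :: "('b set \<times> ('b \<times> 'b) set) \<Rightarrow> 'b \<Rightarrow> 'b \<Rightarrow> 'b \<Rightarrow> bool" where
  "rooted_arc T r x y \<longleftrightarrow> (x, y) \<in> snd T \<and> dist_rel (snd T) y r < dist_rel (snd T) x r"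

end

theory Submission
  imports Defs
begin



abbreviation reach :: "'a set set \<Rightarrow> 'a \<Rightarrow> 'a \<Rightarrow> bool" where
  "reach F x y \<equiv> (x, y) \<in> (adj_rel F)\<^sup>*"

definition conn :: "'a set \<Rightarrow> 'a set set \<Rightarrow> bool" where
  "conn W F \<longleftrightarrow> (\<forall>x\<in>W. \<forall>y\<in>W. reach F x y)"

lemma connD: "conn W F \<Longrightarrow> x \<in> W \<Longrightarrow> y \<in> W \<Longrightarrow> reach F x y"
  unfolding conn_def by blast

lemma adj_rel_sym: "(x, y) \<in> adj_rel F \<Longrightarrow> (y, x) \<in> adj_rel F"
  by (simp add: adj_rel_def insert_commute)

lemma adj_relI: "{x, y} \<in> F \<Longrightarrow> (x, y) \<in> adj_rel F"
  by (simp add: adj_rel_def)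

lemma reach_sym: "reach F x y \<Longrightarrow> reach F y x"
proof (induction rule: rtrancl_induct)
  case base then show ?case by simp
next
  case (step y z) then show ?case
    by (meson adj_rel_sym converse_rtrancl_into_rtrancl)
qed

lemma adj_rel_mono: "F \<subseteq> F' \<Longrightarrow> adj_rel F \<subseteq> adj_rel F'"
  by (auto simp: adj_rel_def)

lemma reach_mono: "reach F x y \<Longrightarrow> F \<subseteq> F' \<Longrightarrow> reach F' x y"
  by (meson adj_rel_mono rtrancl_mono subsetD)

lemma reach_trans: "reach F x y \<Longrightarrow> reach F y z \<Longrightarrow> reach F x z"
  by simp

lemma comp_card_le1:
  assumes "finite W" "card (components W F) \<le> 1"
  shows "conn W F"
  unfolding conn_def
proof (intro ballI)
  fix x y assume xy: "x \<in> W" "y \<in> W"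
  let ?r = "{(x, y). x \<in> W \<and> y \<in> W \<and> (x, y) \<in> (adj_rel F)\<^sup>*}"
  have fin: "finite (W // ?r)" by (rule finite_quotient) (use assms in auto)
  have cx: "?r``{x} \<in> W // ?r" using xy(1) by (rule quotientI)
  have cy: "?r``{y} \<in> W // ?r" using xy(2) by (rule quotientI)
  have "?r``{x} = ?r``{y}"
  proof (rule ccontr)
    assume "?r``{x} \<noteq> ?r``{y}"
    then have "card {?r``{x}, ?r``{y}} = 2" by simp
    moreover have "card {?r``{x}, ?r``{y}} \<le> card (W // ?r)"
      using cx cy fin by (intro card_mono) auto
    ultimately show False using assms(2) unfolding components_def by simp
  qed
  moreover have "y \<in> ?r``{y}" using xy by auto
  ultimately show "reach F x y" by auto
qed

lemma comp_card_ge2: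
  assumes "finite W" "\<not> conn W F"
  shows "card (components W F) \<ge> 2"
proof -
  obtain x y where xy: "x \<in> W" "y \<in> W" "\<not> reach F x y" using assms(2) unfolding conn_def by blast
  let ?r = "{(x, y). x \<in> W \<and> y \<in> W \<and> (x, y) \<in> (adj_rel F)\<^sup>*}"
  have fin: "finite (W // ?r)" by (rule finite_quotient) (use assms in auto)
  have cx: "?r``{x} \<in> W // ?r" using xy(1) by (rule quotientI)
  have cy: "?r``{y} \<in> W // ?r" using xy(2) by (rule quotientI)
  have "y \<in> ?r``{y}" using xy by auto
  moreover have "y \<notin> ?r``{x}" using xy by auto
  ultimately have "?r``{x} \<noteq> ?r``{y}" by blast
  then have "card {?r``{x}, ?r``{y}} = 2" by simp
  moreover have "card {?r``{x}, ?r``{y}} \<le> card (W // ?r)"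
    using cx cy fin by (intro card_mono) auto
  ultimately show ?thesis unfolding components_def by simp
qed

lemma comp_card_1:
  assumes "W \<noteq> {}" "conn W F"
  shows "card (components W F) = 1"
proof -
  let ?r = "{(x, y). x \<in> W \<and> y \<in> W \<and> (x, y) \<in> (adj_rel F)\<^sup>*}"
  have "\<And>x. x \<in> W \<Longrightarrow> ?r``{x} = W" using assms(2) unfolding conn_def by auto
  then have "W // ?r = {W}" using assms(1) unfolding quotient_def by auto
  then show ?thesis unfolding components_def by simp
qed

lemma del_sub: "del_vertex_E F w \<subseteq> F" by (auto simp: del_vertex_E_def)
lemma del_notin: "e \<in> del_vertex_E F w \<Longrightarrow> w \<notin> e" by (auto simp: del_vertex_E_def)
lemma del_mono: "F \<subseteq> F' \<Longrightarrow> del_vertex_E F w \<subseteq> del_vertex_E F' w" by (auto simp: del_vertex_E_def)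
lemma delI: "e \<in> F \<Longrightarrow> w \<notin> e \<Longrightarrow> e \<in> del_vertex_E F w" by (auto simp: del_vertex_E_def)

lemma graph_edge: "graph V E \<Longrightarrow> e \<in> E \<Longrightarrow> e \<subseteq> V \<and> card e = 2"
  by (auto simp: graph_def)

lemma graph_edge2: "graph V E \<Longrightarrow> {x, y} \<in> E \<Longrightarrow> x \<in> V \<and> y \<in> V \<and> x \<noteq> y"
  by (auto simp: graph_def)

lemma cut_char:
  assumes "graph V E" "connected_graph V E"
  shows "cut_vertex V E v \<longleftrightarrow> v \<in> V \<and> \<not> conn (V - {v}) (del_vertex_E E v)"
proof -
  have fin: "finite V" using assms(1) by (simp add: graph_def)
  have c1: "card (components V E) = 1"
    using assms(2) by (intro comp_card_1) (auto simp: connected_graph_def conn_def)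
  have fin': "finite (V - {v})" using fin by simp
  show ?thesis unfolding cut_vertex_def c1
  proof (cases "conn (V - {v}) (del_vertex_E E v)")
    case True
    then show "(v \<in> V \<and> 1 < card (components (V - {v}) (del_vertex_E E v))) =
     (v \<in> V \<and> \<not> conn (V - {v}) (del_vertex_E E v))"
    proof (cases "V - {v} = {}")
      case True
      then have "components (V - {v}) (del_vertex_E E v) = {}" by (simp only: components_def quotient_def True) simp
      then show ?thesis using \<open>conn _ _\<close> by simp
    qed (use comp_card_1[of "V - {v}" "del_vertex_E E v"] True in auto)
  next
    case False
    then show "(v \<in> V \<and> 1 < card (components (V - {v}) (del_vertex_E E v))) =
     (v \<in> V \<and> \<not> conn (V - {v}) (del_vertex_E E v))"
      using comp_card_ge2[OF fin' False] by auto
  qed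
qed

lemma bicon_char:
  assumes "graph V E"
  shows "biconnected V E \<longleftrightarrow> V \<noteq> {} \<and> conn V E \<and> (\<forall>w\<in>V. conn (V - {w}) (del_vertex_E E w))"
proof -
  have "connected_graph V E \<longleftrightarrow> V \<noteq> {} \<and> conn V E"
    by (auto simp: connected_graph_def conn_def)
  then show ?thesis unfolding biconnected_def using cut_char[OF assms] by blast
qed

lemma bicon_minus:
  assumes "graph V1 E1" "biconnected V1 E1"
  shows "conn (V1 - {w}) (del_vertex_E E1 w)"
proof (cases "w \<in> V1")
  case True then show ?thesis using assms bicon_char by blast
next
  case False
  have "del_vertex_E E1 w = E1" using False assms(1) by (auto simp: del_vertex_E_def graph_def)
  then show ?thesis using False assms bicon_char by auto
qed

lemma walk_seg:
  assumes "\<forall>i<k. (f i, f (Suc i)) \<in> R" "i \<le> j" "j \<le> k"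
  shows "(f i, f j) \<in> R ^^ (j - i)"
  using assms(2,3)
proof (induction j rule: dec_induct)
  case base then show ?case by simp
next
  case (step n)
  then have "(f i, f n) \<in> R ^^ (n - i)" by simp
  moreover have "(f n, f (Suc n)) \<in> R" using assms(1) step by simp
  ultimately show ?case using step by (auto simp: Suc_diff_le intro: relcompI)
qed

lemma path_reach:
  assumes "i \<le> j" "\<forall>l. i \<le> l \<and> l \<le> j \<longrightarrow> f l \<noteq> w" "\<forall>l<j. {f l, f (Suc l)} \<in> F"
  shows "reach (del_vertex_E F w) (f i) (f j)"
  using assms(1)
proof (induction j rule: dec_induct)
  case base then show ?case by simp
next
  case (step n)
  have "{f n, f (Suc n)} \<in> del_vertex_E F w"
    using assms(2)[rule_format, of n] assms(2)[rule_format, of "Suc n"] assms(3) step by (intro delI) auto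
  then show ?case using step by (meson adj_relI rtrancl.rtrancl_into_rtrancl)
qed

lemma union_bicon:
  assumes G: "graph V E"
    and H1: "subgraph V1 E1 V E" "biconnected V1 E1"
    and H2: "subgraph V2 E2 V E" "biconnected V2 E2"
    and v: "v \<in> V1" "v \<in> V2" and a: "a \<in> V1" "a \<noteq> v" and b: "b \<in> V2" "b \<noteq> v"
    and ab: "reach (del_vertex_E E v) a b"
  shows "\<exists>V3 E3. subgraph V3 E3 V E \<and> biconnected V3 E3 \<and> V1 \<subseteq> V3 \<and> V2 \<subseteq> V3 \<and> E1 \<subseteq> E3 \<and> E2 \<subseteq> E3"
proof -
  let ?R = "adj_rel (del_vertex_E E v)"
  have g1: "graph V1 E1" and g2: "graph V2 E2" using H1 H2 by (auto simp: subgraph_def)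
  have "\<exists>n. (a, b) \<in> ?R ^^ n" using ab rtrancl_power by blast
  define k where "k = (LEAST n. (a, b) \<in> ?R ^^ n)"
  have kin: "(a, b) \<in> ?R ^^ k" unfolding k_def using \<open>\<exists>n. _\<close> by (rule LeastI_ex)
  have kmin: "\<And>n. (a, b) \<in> ?R ^^ n \<Longrightarrow> k \<le> n" unfolding k_def by (rule Least_le)
  obtain f where f0: "f 0 = a" and fk: "f k = b" and fw: "\<forall>i<k. (f i, f (Suc i)) \<in> ?R"
    using kin relpow_fun_conv by metis
  have fe: "{f i, f (Suc i)} \<in> E \<and> v \<notin> {f i, f (Suc i)}" if "i < k" for i
    using fw that by (auto simp: adj_rel_def del_vertex_E_def)
  have fnv: "f i \<noteq> v" if "i \<le> k" for i
  proof (cases i)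
    case 0 then show ?thesis using f0 a by simp
  next
    case (Suc j) then show ?thesis using fe[of j] that by auto
  qed
  have fV: "f i \<in> V" if "i \<le> k" for i
  proof (cases i)
    case 0 then show ?thesis using f0 a H1 by (auto simp: subgraph_def)
  next
    case (Suc j) then show ?thesis using fe[of j] that graph_edge[OF G] by auto
  qed
  have dist: "f i \<noteq> f j" if "i < j" "j \<le> k" for i j
  proof
    assume eq: "f i = f j"
    have "(a, f i) \<in> ?R ^^ i" using walk_seg[OF fw, of 0 i] that f0 by simp
    moreover have "(f j, b) \<in> ?R ^^ (k - j)" using walk_seg[OF fw, of j k] that fk by simp
    ultimately have "(a, b) \<in> ?R ^^ (i + (k - j))" using eq relpow_add by fastforce
    then show False using kmin that by fastforce
  qed
  define EP where "EP = {{f i, f (Suc i)} | i. i < k}"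
  have EPin: "\<forall>l<k. {f l, f (Suc l)} \<in> EP" unfolding EP_def by blast
  define V3 where "V3 = V1 \<union> V2 \<union> f ` {..k}"
  define E3 where "E3 = E1 \<union> E2 \<union> EP"
  have EPE: "EP \<subseteq> E" unfolding EP_def using fe by blast
  have sub: "subgraph V3 E3 V E"
  proof -
    have "V3 \<subseteq> V" using H1 H2 fV by (auto simp: V3_def subgraph_def)
    moreover have "E3 \<subseteq> E" using H1 H2 EPE by (auto simp: E3_def subgraph_def)
    moreover have "finite V3" using \<open>V3 \<subseteq> V\<close> G by (auto simp: graph_def intro: finite_subset)
    moreover have "\<forall>e\<in>E3. e \<subseteq> V3 \<and> card e = 2"
    proof
      fix e assume "e \<in> E3"
      then consider "e \<in> E1" | "e \<in> E2" | "e \<in> EP" unfolding E3_def by blast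
      then show "e \<subseteq> V3 \<and> card e = 2"
      proof cases
        case 1 then show ?thesis using g1 by (auto simp: graph_def V3_def)
      next
        case 2 then show ?thesis using g2 by (auto simp: graph_def V3_def)
      next
        case 3
        then obtain i where "i < k" "e = {f i, f (Suc i)}" unfolding EP_def by blast
        then show ?thesis using graph_edge[OF G] EPE \<open>e \<in> EP\<close> by (auto simp: V3_def)
      qed
    qed
    ultimately show ?thesis by (simp add: subgraph_def graph_def)
  qed
  have g3: "graph V3 E3" using sub by (simp add: subgraph_def)
  have c1: "conn V1 E1" and c2: "conn V2 E2" using H1 H2 g1 g2 bicon_char by blast+
  have m1: "\<And>w. del_vertex_E E1 w \<subseteq> del_vertex_E E3 w" by (rule del_mono) (auto simp: E3_def)
  have m2: "\<And>w. del_vertex_E E2 w \<subseteq> del_vertex_E E3 w" by (rule del_mono) (auto simp: E3_def)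
  have mP: "\<And>w. del_vertex_E EP w \<subseteq> del_vertex_E E3 w" by (rule del_mono) (auto simp: E3_def)
  have hub: "\<exists>h. \<forall>x\<in>V3 - {w}. reach (del_vertex_E E3 w) x h" for w
  proof (cases "w = v")
    case True
    have ra: "reach (del_vertex_E E3 w) x a" if x: "x \<in> V3 - {w}" for x
    proof -
      have "x \<in> V1 \<or> x \<in> V2 \<or> (\<exists>j\<le>k. x = f j)" using x unfolding V3_def by auto
      then consider "x \<in> V1" | "x \<in> V2" | j where "j \<le> k" "x = f j" by (elim disjE exE conjE) auto
      then show ?thesis
      proof cases
        case 1
        then have "reach (del_vertex_E E1 w) x a"
          using x a True by (intro connD[OF bicon_minus[OF g1 H1(2), of w]]) auto
        then show ?thesis by (rule reach_mono[OF _ m1])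
      next
        case 2
        then have "reach (del_vertex_E E2 w) x b"
          using x b True by (intro connD[OF bicon_minus[OF g2 H2(2), of w]]) auto
        then have "reach (del_vertex_E E3 w) x b" by (rule reach_mono[OF _ m2])
        moreover have "reach (del_vertex_E EP w) (f 0) (f k)"
          using path_reach[of 0 k f w EP] EPin fnv True by auto
        then have "reach (del_vertex_E E3 w) (f k) (f 0)" by (rule reach_mono[OF reach_sym mP])
        then have "reach (del_vertex_E E3 w) b a" using f0 fk by simp
        ultimately show ?thesis by (rule rtrancl_trans)
      next
        case 3
        have "reach (del_vertex_E EP w) (f 0) (f j)"
          using path_reach[of 0 j f w EP] EPin fnv True 3 by auto
        then have "reach (del_vertex_E E3 w) (f j) (f 0)" by (rule reach_mono[OF reach_sym mP])
        then show ?thesis using f0 3 by simp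
      qed
    qed
    show ?thesis
    proof (rule exI[of _ a], intro ballI)
      fix x assume "x \<in> V3 - {w}" then show "reach (del_vertex_E E3 w) x a" by (rule ra)
    qed
  next
    case False
    have r1: "reach (del_vertex_E E3 w) x v" if "x \<in> V1" "x \<noteq> w" for x
    proof -
      have "reach (del_vertex_E E1 w) x v"
        using that v False by (intro connD[OF bicon_minus[OF g1 H1(2), of w]]) auto
      then show ?thesis by (rule reach_mono[OF _ m1])
    qed
    have r2: "reach (del_vertex_E E3 w) x v" if "x \<in> V2" "x \<noteq> w" for x
    proof -
      have "reach (del_vertex_E E2 w) x v"
        using that v False by (intro connD[OF bicon_minus[OF g2 H2(2), of w]]) auto
      then show ?thesis by (rule reach_mono[OF _ m2])
    qed
    have rv: "reach (del_vertex_E E3 w) x v" if x: "x \<in> V3 - {w}" for x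
    proof -
      have "x \<in> V1 \<or> x \<in> V2 \<or> (\<exists>j\<le>k. x = f j)" using x unfolding V3_def by auto
      then consider "x \<in> V1" | "x \<in> V2" | j where "j \<le> k" "x = f j" by (elim disjE exE conjE) auto
      then show ?thesis
      proof cases
        case 1 then show ?thesis using r1 x by blast
      next
        case 2 then show ?thesis using r2 x by blast
      next
        case 3
        show ?thesis
        proof (cases "\<forall>l\<le>j. f l \<noteq> w")
          case True
          have "reach (del_vertex_E EP w) (f 0) (f j)"
            using path_reach[of 0 j f w EP] EPin True 3 by auto
          then have "reach (del_vertex_E E3 w) (f j) (f 0)" by (rule reach_mono[OF reach_sym mP])
          then have "reach (del_vertex_E E3 w) x a" using f0 3 by simp
          moreover have "a \<noteq> w" using True f0 by auto
          ultimately have "reach (del_vertex_E E3 w) x a" "reach (del_vertex_E E3 w) a v" using r1[OF a(1)] by auto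
          then show ?thesis by (rule rtrancl_trans)
        next
          case False
          then obtain l where l: "l \<le> j" "f l = w" by blast
          have lj: "l < j" using l 3 x by (cases "l = j") auto
          have nw: "\<forall>l'. j \<le> l' \<and> l' \<le> k \<longrightarrow> f l' \<noteq> w"
          proof (intro allI impI)
            fix l' assume l': "j \<le> l' \<and> l' \<le> k"
            then have "l < l'" using lj by simp
            then show "f l' \<noteq> w" using dist[of l l'] l l' by simp
          qed
          have "reach (del_vertex_E EP w) (f j) (f k)"
            using path_reach[of j k f w EP] EPin nw 3 by auto
          then have "reach (del_vertex_E E3 w) (f j) (f k)" by (rule reach_mono[OF _ mP])
          then have "reach (del_vertex_E E3 w) x b" using fk 3 by simp
          moreover have "b \<noteq> w" using nw 3 fk by auto
          ultimately have "reach (del_vertex_E E3 w) x b" "reach (del_vertex_E E3 w) b v" using r2[OF b(1)] by auto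
          then show ?thesis by (rule rtrancl_trans)
        qed
      qed
    qed
    show ?thesis
    proof (rule exI[of _ v], intro ballI)
      fix x assume "x \<in> V3 - {w}" then show "reach (del_vertex_E E3 w) x v" by (rule rv)
    qed
  qed
  have connw: "conn (V3 - {w}) (del_vertex_E E3 w)" for w
  proof -
    obtain h where h: "\<forall>x\<in>V3 - {w}. reach (del_vertex_E E3 w) x h" using hub[of w] by (elim exE)
    show ?thesis unfolding conn_def
    proof (intro ballI)
      fix x y assume xy: "x \<in> V3 - {w}" "y \<in> V3 - {w}"
      have xh: "reach (del_vertex_E E3 w) x h" using h xy by auto
      have hy: "reach (del_vertex_E E3 w) h y" by (rule reach_sym) (use h xy in auto)
      show "reach (del_vertex_E E3 w) x y" using xh hy by (rule rtrancl_trans)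
    qed
  qed
  have conn3: "conn V3 E3"
  proof -
    have "reach E3 x v" if "x \<in> V3" for x
    proof -
      have "x \<in> V1 \<or> x \<in> V2 \<or> (\<exists>j\<le>k. x = f j)" using that unfolding V3_def by auto
      then consider "x \<in> V1" | "x \<in> V2" | j where "j \<le> k" "x = f j" by (elim disjE exE conjE) auto
      then show ?thesis
      proof cases
        case 1 then have "reach E1 x v" using v by (intro connD[OF c1]) auto
        then show ?thesis by (rule reach_mono) (auto simp: E3_def)
      next
        case 2 then have "reach E2 x v" using v by (intro connD[OF c2]) auto
        then show ?thesis by (rule reach_mono) (auto simp: E3_def)
      next
        case 3
        have "reach (del_vertex_E EP v) (f 0) (f j)"
          using path_reach[of 0 j f v EP] EPin fnv 3 by auto
        then have "reach E3 (f j) (f 0)" by (rule reach_mono[OF reach_sym]) (use del_sub[of EP v] in \<open>auto simp: E3_def\<close>)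
        then have "reach E3 x a" using f0 3 by simp
        moreover have "reach E1 a v" using v a by (intro connD[OF c1]) auto
        then have "reach E3 a v" by (rule reach_mono) (auto simp: E3_def)
        ultimately show ?thesis by (rule rtrancl_trans)
      qed
    qed
    note rv3 = this
    show ?thesis unfolding conn_def
    proof (intro ballI)
      fix x y assume xy: "x \<in> V3" "y \<in> V3"
      have xh: "reach E3 x v" using xy(1) by (rule rv3)
      have hy: "reach E3 v y" by (rule reach_sym) (rule rv3[OF xy(2)])
      show "reach E3 x y" using xh hy by (rule rtrancl_trans)
    qed
  qed
  have "biconnected V3 E3" using bicon_char[OF g3] conn3 connw v by (auto simp: V3_def)
  moreover have "V1 \<subseteq> V3 \<and> V2 \<subseteq> V3 \<and> E1 \<subseteq> E3 \<and> E2 \<subseteq> E3" by (auto simp: V3_def E3_def)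
  ultimately show ?thesis using sub by blast
qed




lemma conn_single: "W \<subseteq> {z} \<Longrightarrow> conn W F"
  unfolding conn_def by auto

lemma K2_bicon:
  assumes G: "graph V E" and e: "{x, y} \<in> E"
  shows "subgraph {x, y} {{x, y}} V E \<and> biconnected {x, y} {{x, y}}"
proof -
  have xy: "x \<in> V" "y \<in> V" "x \<noteq> y" using graph_edge2[OF G e] by auto
  have g: "graph {x, y} {{x, y}}" using xy by (simp add: graph_def)
  have c: "conn {x, y} {{x, y}}"
  proof -
    have r1: "reach {{x, y}} x y" by (rule r_into_rtrancl) (simp add: adj_relI)
    have r2: "reach {{x, y}} y x" by (rule r_into_rtrancl) (simp add: adj_relI insert_commute)
    show ?thesis unfolding conn_def using r1 r2 by auto
  qed
  have "\<forall>w\<in>{x, y}. conn ({x, y} - {w}) (del_vertex_E {{x, y}} w)"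
  proof
    fix w assume "w \<in> {x, y}"
    then have "{x, y} - {w} \<subseteq> {x} \<or> {x, y} - {w} \<subseteq> {y}" by auto
    then show "conn ({x, y} - {w}) (del_vertex_E {{x, y}} w)" using conn_single by metis
  qed
  then have "biconnected {x, y} {{x, y}}" using bicon_char[OF g] c by auto
  moreover have "subgraph {x, y} {{x, y}} V E" using g xy e by (simp add: subgraph_def)
  ultimately show ?thesis by simp
qed

locale G =
  fixes V :: "'a set" and E :: "'a set set"
  assumes graph: "graph V E" and con: "connected_graph V E" and hascut: "\<exists>v. cut_vertex V E v"
begin

lemma finV: "finite V" using graph by (simp add: graph_def)

lemma finE: "finite E"
proof -
  have "E \<subseteq> Pow V" using graph by (auto simp: graph_def)
  then show ?thesis using finV by (meson finite_Pow_iff finite_subset)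
qed

lemma conV: "conn V E" using con by (simp add: connected_graph_def conn_def)

lemma cutc: "cut_vertex V E v \<longleftrightarrow> v \<in> V \<and> \<not> conn (V - {v}) (del_vertex_E E v)"
  by (rule cut_char[OF graph con])

lemma edgeV: "{x, y} \<in> E \<Longrightarrow> x \<in> V \<and> y \<in> V \<and> x \<noteq> y"
  by (rule graph_edge2[OF graph])

lemma adjE: "(x, y) \<in> adj_rel F \<Longrightarrow> {x, y} \<in> F"
  by (simp add: adj_rel_def)

lemma two_vertices: "u \<in> V \<Longrightarrow> \<exists>z\<in>V. z \<noteq> u"
proof -
  assume u: "u \<in> V"
  obtain c where "cut_vertex V E c" using hascut by blast
  then have "\<not> conn (V - {c}) (del_vertex_E E c)" using cutc by blast
  then obtain a b where ab: "a \<in> V - {c}" "b \<in> V - {c}" "\<not> reach (del_vertex_E E c) a b"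
    unfolding conn_def by blast
  then have ne: "a \<noteq> b" by (metis rtrancl.rtrancl_refl)
  have "a \<in> V" "b \<in> V" using ab(1,2) by simp_all
  then show ?thesis using ne by (metis)
qed

lemma has_edge: "u \<in> V \<Longrightarrow> \<exists>z. {u, z} \<in> E"
proof -
  assume u: "u \<in> V"
  obtain z where z: "z \<in> V" "z \<noteq> u" using two_vertices[OF u] by blast
  have "reach E u z" using connD[OF conV u z(1)] .
  then show ?thesis
  proof (cases rule: converse_rtranclE)
    case base then show ?thesis using z by simp
  next
    case (step y)
    then have "{u, y} \<in> E" by (simp add: adj_rel_def)
    then show ?thesis by (rule exI)
  qed
qed

lemma block_props:
  assumes "is_block V E B"
  shows "graph (fst B) (snd B)" "fst B \<subseteq> V" "snd B \<subseteq> E" "biconnected (fst B) (snd B)"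
  using assms by (auto simp: is_block_def subgraph_def)

lemma block_max:
  assumes "is_block V E B" "subgraph V3 E3 V E" "biconnected V3 E3" "fst B \<subseteq> V3" "snd B \<subseteq> E3"
  shows "V3 = fst B \<and> E3 = snd B"
  using assms unfolding is_block_def by blast

lemma block_exists:
  assumes e: "{x, y} \<in> E"
  shows "\<exists>B. is_block V E B \<and> {x, y} \<in> snd B"
proof -
  define P where "P = (\<lambda>H. subgraph (fst H) (snd H) V E \<and> biconnected (fst H) (snd H) \<and> {x, y} \<in> snd H)"
  define f where "f = (\<lambda>H::'a set \<times> 'a set set. card (fst H) + card (snd H))"
  have P0: "P ({x, y}, {{x, y}})" using K2_bicon[OF graph e] by (simp add: P_def)
  have bound: "f H \<le> card V + card E" if "P H" for H
  proof -
    have "fst H \<subseteq> V" "snd H \<subseteq> E" using that by (auto simp: P_def subgraph_def)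
    then show ?thesis unfolding f_def using finV finE by (simp add: add_mono card_mono)
  qed
  obtain B where B: "P B" "\<forall>H. P H \<longrightarrow> f H \<le> f B"
    using ex_has_greatest_nat[of P "({x, y}, {{x, y}})" f "card V + card E + 1"] P0 bound
    by (metis less_Suc_eq_le add.commute plus_1_eq_Suc)
  have "is_block V E B"
    unfolding is_block_def
  proof (intro conjI allI impI)
    show "subgraph (fst B) (snd B) V E" "biconnected (fst B) (snd B)" using B by (auto simp: P_def)
  next
    fix V3 E3 assume h: "subgraph V3 E3 V E \<and> biconnected V3 E3 \<and> fst B \<subseteq> V3 \<and> snd B \<subseteq> E3"
    have "P (V3, E3)" using h B(1) by (auto simp: P_def)
    then have "f (V3, E3) \<le> f B" using B(2) by blast
    moreover have fin: "finite V3" "finite E3" using h finV finE by (auto simp: subgraph_def intro: finite_subset)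
    moreover have "card (fst B) \<le> card V3" "card (snd B) \<le> card E3" using h fin by (auto intro: card_mono)
    ultimately have c: "card (fst B) = card V3" "card (snd B) = card E3" by (auto simp: f_def)
    have "fst B = V3" using card_subset_eq[OF fin(1) _ c(1)] h by blast
    moreover have "snd B = E3" using card_subset_eq[OF fin(2) _ c(2)] h by blast
    ultimately show "V3 = fst B" "E3 = snd B" by auto
  qed
  then have "is_block V E B \<and> {x, y} \<in> snd B" using B(1) by (simp add: P_def)
  then show ?thesis by (rule exI)
qed

lemma block_induced:
  assumes B: "is_block V E B" and x: "x \<in> fst B" and y: "y \<in> fst B" and e: "{x, y} \<in> E"
  shows "{x, y} \<in> snd B"
proof -
  note bp = block_props[OF B]
  let ?E3 = "insert {x, y} (snd B)"
  have g: "graph (fst B) ?E3" using bp(1) x y graph_edge[OF graph e] by (auto simp: graph_def)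
  have sub: "subgraph (fst B) ?E3 V E" using g bp e by (auto simp: subgraph_def)
  have bc: "fst B \<noteq> {} \<and> conn (fst B) (snd B) \<and> (\<forall>w\<in>fst B. conn (fst B - {w}) (del_vertex_E (snd B) w))"
    using bicon_char[OF bp(1)] bp(4) by blast
  have "biconnected (fst B) ?E3"
    unfolding bicon_char[OF g]
  proof (intro conjI ballI)
    show "fst B \<noteq> {}" using bc by blast
    show "conn (fst B) ?E3" using bc unfolding conn_def by (meson reach_mono subset_insertI)
  next
    fix w assume "w \<in> fst B"
    then have "conn (fst B - {w}) (del_vertex_E (snd B) w)" using bc by blast
    moreover have "del_vertex_E (snd B) w \<subseteq> del_vertex_E ?E3 w" by (rule del_mono) auto
    ultimately show "conn (fst B - {w}) (del_vertex_E ?E3 w)" unfolding conn_def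
      by (meson reach_mono)
  qed
  then have "?E3 = snd B" using block_max[OF B sub] by auto
  then show ?thesis by auto
qed

lemma block_nonempty: "is_block V E B \<Longrightarrow> fst B \<noteq> {}"
  using block_props bicon_char by blast

lemma block_two:
  assumes B: "is_block V E B" and u: "u \<in> fst B"
  shows "\<exists>y\<in>fst B. y \<noteq> u"
proof (rule ccontr)
  assume "\<not> (\<exists>y\<in>fst B. y \<noteq> u)"
  then have "fst B \<subseteq> {u}" by blast
  then have fB: "fst B = {u}" using u by blast
  have sB: "snd B = {}"
  proof (rule ccontr)
    assume "snd B \<noteq> {}"
    then obtain e where "e \<in> snd B" by blast
    then have "e \<subseteq> {u}" "card e = 2" using block_props(1)[OF B] fB by (auto simp: graph_def)
    then have "card e \<le> 1" using card_mono[of "{u}" e] by simp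
    then show False using \<open>card e = 2\<close> by simp
  qed
  have uV: "u \<in> V" using block_props(2)[OF B] u by auto
  obtain z where z: "{u, z} \<in> E" using has_edge[OF uV] by blast
  have "{u, z} = fst B" using block_max[OF B] K2_bicon[OF graph z] fB sB by auto
  then show False using edgeV[OF z] fB by auto
qed

lemma block_minus:
  assumes B: "is_block V E B"
  shows "conn (fst B - {v}) (del_vertex_E E v)"
proof -
  have "conn (fst B - {v}) (del_vertex_E (snd B) v)"
    by (rule bicon_minus[OF block_props(1)[OF B] block_props(4)[OF B]])
  moreover have "del_vertex_E (snd B) v \<subseteq> del_vertex_E E v" using block_props(3)[OF B] by (rule del_mono)
  ultimately show ?thesis unfolding conn_def by (meson reach_mono)
qed

lemma sep:
  assumes B1: "is_block V E B1" and B2: "is_block V E B2"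
    and v: "v \<in> fst B1" "v \<in> fst B2" and a: "a \<in> fst B1" "a \<noteq> v" and b: "b \<in> fst B2" "b \<noteq> v"
    and ab: "reach (del_vertex_E E v) a b"
  shows "B1 = B2"
proof -
  have h1: "subgraph (fst B1) (snd B1) V E" "biconnected (fst B1) (snd B1)" using B1 by (auto simp: is_block_def)
  have h2: "subgraph (fst B2) (snd B2) V E" "biconnected (fst B2) (snd B2)" using B2 by (auto simp: is_block_def)
  obtain V3 E3 where H: "subgraph V3 E3 V E" "biconnected V3 E3" "fst B1 \<subseteq> V3" "fst B2 \<subseteq> V3"
    "snd B1 \<subseteq> E3" "snd B2 \<subseteq> E3"
    using union_bicon[OF graph h1 h2 v a b ab] by blast
  have "V3 = fst B1 \<and> E3 = snd B1" using block_max[OF B1 H(1,2,3,5)] .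
  moreover have "V3 = fst B2 \<and> E3 = snd B2" using block_max[OF B2 H(1,2,4,6)] .
  ultimately show ?thesis by (simp add: prod_eq_iff)
qed

lemma two_blocks_cut:
  assumes B1: "is_block V E B1" and B2: "is_block V E B2" and ne: "B1 \<noteq> B2"
    and v: "v \<in> fst B1" "v \<in> fst B2"
  shows "cut_vertex V E v"
proof -
  obtain a where a: "a \<in> fst B1" "a \<noteq> v" using block_two[OF B1 v(1)] by blast
  obtain b where b: "b \<in> fst B2" "b \<noteq> v" using block_two[OF B2 v(2)] by blast
  have vV: "v \<in> V" using block_props(2)[OF B1] v by auto
  have "\<not> conn (V - {v}) (del_vertex_E E v)"
  proof
    assume c: "conn (V - {v}) (del_vertex_E E v)"
    have "a \<in> V - {v}" "b \<in> V - {v}" using a b block_props(2)[OF B1] block_props(2)[OF B2] by auto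
    then have "reach (del_vertex_E E v) a b" by (rule connD[OF c])
    then show False using sep[OF B1 B2 v a b] ne by simp
  qed
  then show ?thesis using cutc vV by blast
qed

lemma edge_unique:
  assumes B1: "is_block V E B1" and B2: "is_block V E B2"
    and e1: "{x, y} \<in> snd B1" and e2: "{x, y} \<in> snd B2"
  shows "B1 = B2"
proof -
  have "x \<in> fst B1" "y \<in> fst B1" "x \<in> fst B2" "y \<in> fst B2"
    using block_props(1)[OF B1] block_props(1)[OF B2] e1 e2 by (auto simp: graph_def)
  moreover have "x \<noteq> y" using e1 block_props(3)[OF B1] edgeV by blast
  ultimately show ?thesis using sep[OF B1 B2, of x y y] by auto
qed

end




context G begin

abbreviation "R \<equiv> snd (block_tree V E)"
abbreviation "N \<equiv> fst (block_tree V E)"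

definition part :: "('a set \<times> 'a set set) + 'a \<Rightarrow> 'a set" where
  "part t = (case t of Inl B \<Rightarrow> fst B | Inr w \<Rightarrow> {w})"

abbreviation "dist t r \<equiv> dist_rel R t r"

lemma R_iff: "(s, t) \<in> R \<longleftrightarrow> (\<exists>B w. is_block V E B \<and> cut_vertex V E w \<and> w \<in> fst B \<and>
   ((s, t) = (Inl B, Inr w) \<or> (s, t) = (Inr w, Inl B)))"
  unfolding block_tree_def Let_def by auto

lemma R_Inl_Inr: "(Inl B, Inr w) \<in> R \<longleftrightarrow> is_block V E B \<and> cut_vertex V E w \<and> w \<in> fst B"
  unfolding R_iff apply auto apply (metis prod.collapse) done

lemma R_Inr_Inl: "(Inr w, Inl B) \<in> R \<longleftrightarrow> is_block V E B \<and> cut_vertex V E w \<and> w \<in> fst B"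
  unfolding R_iff apply auto apply (metis prod.collapse) done

lemma R_Inl_Inl: "(Inl B, Inl B') \<notin> R" unfolding R_iff by auto
lemma R_Inr_Inr: "(Inr w, Inr w') \<notin> R" unfolding R_iff by auto

lemma N_Inl: "Inl B \<in> N \<longleftrightarrow> is_block V E B" unfolding block_tree_def by auto
lemma N_Inr: "Inr w \<in> N \<longleftrightarrow> cut_vertex V E w" unfolding block_tree_def by auto

lemma R_N: "(s, t) \<in> R \<Longrightarrow> s \<in> N \<and> t \<in> N"
  unfolding R_iff using N_Inl N_Inr by auto

lemma step_blocks:
  assumes "is_block V E B3" "is_block V E B4" "z \<in> fst B3" "z \<in> fst B4"
  shows "(Inl B3, Inl B4) \<in> R\<^sup>*"
proof (cases "B3 = B4")
  case True then show ?thesis by simp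
next
  case False
  then have c: "cut_vertex V E z" using two_blocks_cut assms by blast
  have r1: "(Inl B3, Inr z) \<in> R" using assms c R_Inl_Inr by auto
  have r2: "(Inr z, Inl B4) \<in> R" using assms c R_Inr_Inl by auto
  show ?thesis using converse_rtrancl_into_rtrancl[OF r1 r_into_rtrancl[OF r2]] .
qed

lemma blocks_reach:
  assumes B: "is_block V E B" and B': "is_block V E B'"
  shows "(Inl B, Inl B') \<in> R\<^sup>*"
proof -
  obtain u where u: "u \<in> fst B" using block_nonempty[OF B] by blast
  obtain u' where u': "u' \<in> fst B'" using block_nonempty[OF B'] by blast
  have "u \<in> V" "u' \<in> V" using u u' block_props(2)[OF B] block_props(2)[OF B'] by auto
  then have r: "reach E u u'" by (rule connD[OF conV])
  have "\<forall>B''. is_block V E B'' \<and> y \<in> fst B'' \<longrightarrow> (Inl B, Inl B'') \<in> R\<^sup>*" if "reach E u y" for y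
    using that
  proof (induction rule: rtrancl_induct)
    case base then show ?case using step_blocks[OF B] u by blast
  next
    case (step y z)
    then have e: "{y, z} \<in> E" by (simp add: adj_rel_def)
    obtain B3 where B3: "is_block V E B3" "{y, z} \<in> snd B3" using block_exists[OF e] by blast
    have yz: "y \<in> fst B3" "z \<in> fst B3" using B3 block_props(1)[OF B3(1)] by (auto simp: graph_def)
    have b3: "(Inl B, Inl B3) \<in> R\<^sup>*" using step.IH B3 yz by blast
    show ?case
    proof (intro allI impI)
      fix B'' assume h: "is_block V E B'' \<and> z \<in> fst B''"
      then have "(Inl B3, Inl B'') \<in> R\<^sup>*" using step_blocks[OF B3(1)] yz by blast
      then show "(Inl B, Inl B'') \<in> R\<^sup>*" using rtrancl_trans[OF b3] by blast
    qed
  qed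
  then show ?thesis using r B' u' by blast
qed

lemma node_block: "t \<in> N \<Longrightarrow> \<exists>B. is_block V E B \<and> (t, Inl B) \<in> R\<^sup>* \<and> (Inl B, t) \<in> R\<^sup>*"
proof (cases t)
  case (Inl B)
  assume "t \<in> N" then have "is_block V E B" using Inl N_Inl by simp
  then show ?thesis using Inl by (intro exI[of _ B]) simp
next
  case (Inr w)
  assume "t \<in> N"
  then have c: "cut_vertex V E w" using Inr N_Inr by simp
  then have "w \<in> V" using cutc by blast
  then obtain z where "{w, z} \<in> E" using has_edge by blast
  then obtain B where B: "is_block V E B" "{w, z} \<in> snd B" using block_exists by blast
  then have "w \<in> fst B" using block_props(1)[OF B(1)] by (auto simp: graph_def)
  then have "(Inr w, Inl B) \<in> R" "(Inl B, Inr w) \<in> R" using B c R_Inl_Inr R_Inr_Inl by auto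
  then show ?thesis using Inr B by blast
qed

lemma node_reach: "t \<in> N \<Longrightarrow> t' \<in> N \<Longrightarrow> (t, t') \<in> R\<^sup>*"
proof -
  assume "t \<in> N" "t' \<in> N"
  then obtain B B' where h: "is_block V E B" "(t, Inl B) \<in> R\<^sup>*" "is_block V E B'" "(Inl B', t') \<in> R\<^sup>*"
    using node_block by meson
  have "(Inl B, Inl B') \<in> R\<^sup>*" using blocks_reach h by blast
  then show ?thesis using rtrancl_trans[OF rtrancl_trans[OF h(2)] h(4)] by blast
qed

lemma dist_ok: "t \<in> N \<Longrightarrow> r \<in> N \<Longrightarrow> (t, r) \<in> R ^^ dist t r"
proof -
  assume "t \<in> N" "r \<in> N"
  then have "\<exists>n. (t, r) \<in> R ^^ n" using node_reach rtrancl_power by blast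
  then show ?thesis unfolding dist_rel_def by (rule LeastI_ex)
qed

lemma dist_le: "(t, r) \<in> R ^^ n \<Longrightarrow> dist t r \<le> n"
  unfolding dist_rel_def by (rule Least_le)

lemma part_conn: "t \<in> N \<Longrightarrow> t \<noteq> Inr v \<Longrightarrow> conn (part t - {v}) (del_vertex_E E v)"
proof (cases t)
  case (Inl B)
  assume "t \<in> N" then show ?thesis using Inl N_Inl block_minus by (auto simp: part_def)
next
  case (Inr w)
  then show ?thesis by (auto simp: part_def intro: conn_single)
qed

lemma part_ne: "t \<in> N \<Longrightarrow> t \<noteq> Inr v \<Longrightarrow> \<exists>a. a \<in> part t - {v}"
proof (cases t)
  case (Inl B)
  assume "t \<in> N"
  then have B: "is_block V E B" using Inl N_Inl by simp
  obtain u where u: "u \<in> fst B" using block_nonempty[OF B] by blast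
  obtain y where y: "y \<in> fst B" "y \<noteq> u" using block_two[OF B u] by blast
  show ?thesis using u y Inl by (cases "u = v") (auto simp: part_def)
next
  case (Inr w)
  assume "t \<noteq> Inr v" then show ?thesis using Inr by (auto simp: part_def)
qed

lemma walk_conn:
  assumes "(t, r) \<in> R ^^ m" "t \<in> N" "t \<noteq> Inr v" "\<forall>k<m. (Inr v, r) \<notin> R ^^ k"
    "a \<in> part t - {v}" "b \<in> part r - {v}"
  shows "reach (del_vertex_E E v) a b"
  using assms
proof (induction m arbitrary: t a)
  case 0
  then have "t = r" by simp
  then show ?case using part_conn[OF 0(2,3)] 0 connD by metis
next
  case (Suc m)
  obtain t' where tt': "(t, t') \<in> R" and t'r: "(t', r) \<in> R ^^ m" using Suc.prems(1) by (rule relpow_Suc_E2)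
  have t'N: "t' \<in> N" using R_N[OF tt'] by simp
  have t'v: "t' \<noteq> Inr v" using t'r Suc.prems(4) by auto
  obtain c where c: "c \<in> part t - {v}" "c \<in> part t' - {v}"
  proof -
    from tt' obtain B w where bw: "is_block V E B" "cut_vertex V E w" "w \<in> fst B"
      "(t, t') = (Inl B, Inr w) \<or> (t, t') = (Inr w, Inl B)" unfolding R_iff by blast
    then have "w \<in> part t - {v} \<and> w \<in> part t' - {v}" using Suc.prems(3) t'v by (auto simp: part_def)
    then show ?thesis using that by blast
  qed
  have "reach (del_vertex_E E v) a c" using connD[OF part_conn[OF Suc.prems(2,3)]] Suc.prems(5) c(1) by blast
  moreover have "reach (del_vertex_E E v) c b"
    using Suc.IH[OF t'r t'N t'v _ c(2) Suc.prems(6)] Suc.prems(4) by auto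
  ultimately show ?case by (rule rtrancl_trans)
qed

lemma dist0: "dist t r = 0 \<Longrightarrow> t \<in> N \<Longrightarrow> r \<in> N \<Longrightarrow> t = r"
  using dist_ok by fastforce

lemma dist_self: "dist t t = 0"
  using dist_le[of t t 0] by simp

lemma nonchild:
  assumes x: "cut_vertex V E x" and B: "is_block V E B" and B': "is_block V E B'"
    and xB: "x \<in> fst B" and xB': "x \<in> fst B'" and r: "r \<in> N"
    and d: "dist (Inl B) r \<le> dist (Inr x) r" and d': "dist (Inl B') r \<le> dist (Inr x) r"
  shows "B = B'"
proof (cases "r = Inr x")
  case True
  then have "dist (Inl B) r = 0" using d dist_self by simp
  then have "Inl B = r" using dist0 r B N_Inl by blast
  then show ?thesis using True by simp
next
  case False
  obtain b where b: "b \<in> part r - {x}" using part_ne[OF r False] by blast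
  have side: "\<exists>a\<in>fst B2 - {x}. reach (del_vertex_E E x) a b"
    if B2: "is_block V E B2" "x \<in> fst B2" "dist (Inl B2) r \<le> dist (Inr x) r" for B2
  proof -
    obtain a where a: "a \<in> fst B2" "a \<noteq> x" using block_two[OF B2(1,2)] by blast
    have B2N: "Inl B2 \<in> N" using B2 N_Inl by simp
    have "\<forall>k<dist (Inl B2) r. (Inr x, r) \<notin> R ^^ k"
      using dist_le B2(3) by fastforce
    then have "reach (del_vertex_E E x) a b"
      using walk_conn[OF dist_ok[OF B2N r] B2N _ _ _ b] a by (auto simp: part_def)
    then show ?thesis using a by blast
  qed
  obtain a where a: "a \<in> fst B - {x}" "reach (del_vertex_E E x) a b" using side[OF B xB d] by blast
  obtain a' where a': "a' \<in> fst B' - {x}" "reach (del_vertex_E E x) a' b" using side[OF B' xB' d'] by blast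
  have "reach (del_vertex_E E x) a a'" using a(2) reach_sym[OF a'(2)] by (rule rtrancl_trans)
  then show ?thesis using sep[OF B B' xB xB'] a a' by blast
qed

lemma first_block:
  assumes v: "cut_vertex V E v" and r: "r \<in> N" and rv: "r \<noteq> Inr v"
  obtains B1 where "is_block V E B1" "v \<in> fst B1" "dist (Inl B1) r < dist (Inr v) r"
    "\<forall>a\<in>fst B1 - {v}. \<forall>b\<in>part r - {v}. reach (del_vertex_E E v) a b"
proof -
  have vN: "Inr v \<in> N" using v N_Inr by simp
  define n where "n = dist (Inr v) r"
  have vr: "(Inr v, r) \<in> R ^^ n" unfolding n_def by (rule dist_ok[OF vN r])
  have "n \<noteq> 0" using vr rv by (cases n) auto
  then obtain n' where n': "n = Suc n'" by (cases n) auto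
  obtain t1 where t1: "(Inr v, t1) \<in> R" "(t1, r) \<in> R ^^ n'" using vr[unfolded n'] by (rule relpow_Suc_E2)
  obtain B1 where B1: "t1 = Inl B1" "is_block V E B1" "v \<in> fst B1" using t1(1) unfolding R_iff by auto
  have "dist (Inl B1) r \<le> n'" using dist_le t1(2) B1 by simp
  then have d: "dist (Inl B1) r < dist (Inr v) r" using n' n_def by simp
  have B1N: "Inl B1 \<in> N" using B1 N_Inl by simp
  have "\<forall>k<n'. (Inr v, r) \<notin> R ^^ k" using dist_le n' n_def by fastforce
  then have "\<forall>a\<in>fst B1 - {v}. \<forall>b\<in>part r - {v}. reach (del_vertex_E E v) a b"
    using walk_conn[OF t1(2)[unfolded B1(1)] B1N] by (auto simp: part_def)
  then show ?thesis using that B1 d by blast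
qed

lemma oneparent_aux:
  assumes B: "is_block V E B" and v: "cut_vertex V E v" and v': "cut_vertex V E v'"
    and vB: "v \<in> fst B" and v'B: "v' \<in> fst B" and ne: "v \<noteq> v'" and r: "r \<in> N"
    and d: "dist (Inr v) r < dist (Inl B) r" and d': "dist (Inr v') r < dist (Inl B) r"
    and le: "dist (Inr v') r \<le> dist (Inr v) r"
  shows False
proof -
  have vN: "Inr v \<in> N" and v'N: "Inr v' \<in> N" using v v' N_Inr by auto
  have rv: "r \<noteq> Inr v"
  proof
    assume "r = Inr v"
    then have "dist (Inr v') r = 0" using le dist_self by simp
    then show False using dist0[OF _ v'N r] \<open>r = Inr v\<close> ne by simp
  qed
  obtain B1 where B1: "is_block V E B1" "v \<in> fst B1" "dist (Inl B1) r < dist (Inr v) r"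
    "\<forall>a\<in>fst B1 - {v}. \<forall>b\<in>part r - {v}. reach (del_vertex_E E v) a b"
    using first_block[OF v r rv] by blast
  have "B1 \<noteq> B" using B1(3) d by auto
  obtain b where b: "b \<in> part r - {v}" using part_ne[OF r rv] by blast
  obtain a1 where a1: "a1 \<in> fst B1" "a1 \<noteq> v" using block_two[OF B1(1,2)] by blast
  have "\<forall>k<dist (Inr v') r. (Inr v, r) \<notin> R ^^ k" using dist_le le by fastforce
  then have vb: "reach (del_vertex_E E v) v' b"
    using walk_conn[OF dist_ok[OF v'N r] v'N _ _ _ b] ne by (auto simp: part_def)
  have ab: "reach (del_vertex_E E v) a1 b" using B1(4) a1 b by blast
  have "reach (del_vertex_E E v) a1 v'" using ab reach_sym[OF vb] by (rule rtrancl_trans)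
  then have "B1 = B" using sep[OF B1(1) B B1(2) vB _ _ v'B] a1 ne by blast
  then show False using \<open>B1 \<noteq> B\<close> by simp
qed

lemma oneparent:
  assumes B: "is_block V E B" and v: "cut_vertex V E v" and v': "cut_vertex V E v'"
    and vB: "v \<in> fst B" and v'B: "v' \<in> fst B" and r: "r \<in> N"
    and d: "dist (Inr v) r < dist (Inl B) r" and d': "dist (Inr v') r < dist (Inl B) r"
  shows "v = v'"
proof (rule ccontr)
  assume ne: "v \<noteq> v'"
  show False
  proof (cases "dist (Inr v') r \<le> dist (Inr v) r")
    case True then show ?thesis using oneparent_aux[OF B v v' vB v'B ne r d d'] by simp
  next
    case False then show ?thesis using oneparent_aux[OF B v' v v'B vB _ r d' d] ne by simp
  qed
qed

lemma forward_key:
  assumes v: "cut_vertex V E v" and B: "is_block V E B" and vB: "v \<in> fst B"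
    and B0: "is_block V E B0" and d: "dist (Inr v) (Inl B0) < dist (Inl B) (Inl B0)"
    and a0: "a0 \<in> fst B0" "a0 \<noteq> v" and x: "x \<in> fst B" "x \<noteq> v"
    and xa: "reach (del_vertex_E E v) x a0"
  shows False
proof -
  have r: "Inl B0 \<in> N" using B0 N_Inl by simp
  have rv: "Inl B0 \<noteq> Inr v" by simp
  obtain B1 where B1: "is_block V E B1" "v \<in> fst B1" "dist (Inl B1) (Inl B0) < dist (Inr v) (Inl B0)"
    "\<forall>a\<in>fst B1 - {v}. \<forall>b\<in>part (Inl B0) - {v}. reach (del_vertex_E E v) a b"
    using first_block[OF v r rv] by blast
  have "B1 \<noteq> B" using B1(3) d by auto
  obtain a1 where a1: "a1 \<in> fst B1" "a1 \<noteq> v" using block_two[OF B1(1,2)] by blast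
  have "reach (del_vertex_E E v) a1 a0" using B1(4) a1 a0 by (auto simp: part_def)
  then have "reach (del_vertex_E E v) a1 x" using reach_sym[OF xa] by (rule rtrancl_trans)
  then have "B1 = B" using sep[OF B1(1) B B1(2) vB a1 x] by blast
  then show False using \<open>B1 \<noteq> B\<close> by simp
qed

end




lemma exists_switch:
  assumes "P (1::nat)" "\<not> P k" "1 \<le> k"
  shows "\<exists>i. 1 \<le> i \<and> i < k \<and> P i \<and> \<not> P (Suc i)"
  using assms
proof (induction k)
  case 0 then show ?case by simp
next
  case (Suc k)
  show ?case
  proof (cases "P k")
    case True
    then have "1 \<le> k" using Suc.prems by (cases k) auto
    then show ?thesis using True Suc.prems by auto
  next
    case False
    then have "1 \<le> k" using Suc.prems by (cases k) auto
    then show ?thesis using Suc.IH[OF Suc.prems(1) False] by auto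
  qed
qed

context G begin

lemma reach_del_ne: "reach (del_vertex_E F u) x y \<Longrightarrow> x \<noteq> u \<Longrightarrow> y \<noteq> u"
proof (induction rule: rtrancl_induct)
  case base then show ?case by simp
next
  case (step y z) then show ?case by (auto simp: adj_rel_def del_vertex_E_def)
qed

lemma reach_in_V: "reach F x y \<Longrightarrow> F \<subseteq> E \<Longrightarrow> x \<in> V \<Longrightarrow> y \<in> V"
proof (induction rule: rtrancl_induct)
  case base then show ?case by simp
next
  case (step y z) then show ?case using edgeV by (auto simp: adj_rel_def)
qed

context
  fixes D assumes D: "one_perfect V E D"
begin

lemma D_edge: "(x, y) \<in> D \<Longrightarrow> {x, y} \<in> E"
  using D by (auto simp: one_perfect_def orientation_def)

lemma D_orient: "{x, y} \<in> E \<Longrightarrow> (x, y) \<in> D \<longleftrightarrow> (y, x) \<notin> D"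
  using D by (auto simp: one_perfect_def orientation_def)

lemma D_clique: "(u, x) \<in> D \<Longrightarrow> (u, y) \<in> D \<Longrightarrow> x \<noteq> y \<Longrightarrow> {x, y} \<in> E"
proof -
  assume h: "(u, x) \<in> D" "(u, y) \<in> D" "x \<noteq> y"
  then have "u \<in> V" using D_edge edgeV by blast
  then show ?thesis using D h by (auto simp: one_perfect_def)
qed

definition S :: "'a \<Rightarrow> 'a set" where
  "S u = {y. \<exists>x. (u, x) \<in> D \<and> reach (del_vertex_E E u) x y}"

lemma S_conn: "y \<in> S u \<Longrightarrow> y' \<in> S u \<Longrightarrow> reach (del_vertex_E E u) y y'"
proof -
  assume "y \<in> S u" "y' \<in> S u"
  then obtain x x' where x: "(u, x) \<in> D" "reach (del_vertex_E E u) x y"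
    and x': "(u, x') \<in> D" "reach (del_vertex_E E u) x' y'" unfolding S_def by blast
  have xx': "reach (del_vertex_E E u) x x'"
  proof (cases "x = x'")
    case True then show ?thesis by simp
  next
    case False
    then have e: "{x, x'} \<in> E" using D_clique x x' by blast
    have "x \<noteq> u" "x' \<noteq> u" using D_edge[OF x(1)] D_edge[OF x'(1)] edgeV by blast+
    then have "{x, x'} \<in> del_vertex_E E u" using e by (auto intro: delI)
    then show ?thesis by (simp add: adj_relI r_into_rtrancl)
  qed
  have "reach (del_vertex_E E u) y x" by (rule reach_sym[OF x(2)])
  then have "reach (del_vertex_E E u) y x'" using xx' by (rule rtrancl_trans)
  then show ?thesis using x'(2) by (rule rtrancl_trans)
qed

lemma S_not_self: "u \<notin> S u"
proof
  assume "u \<in> S u"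
  then obtain x where x: "(u, x) \<in> D" "reach (del_vertex_E E u) x u" unfolding S_def by blast
  have "x \<noteq> u" using D_edge[OF x(1)] edgeV by blast
  then show False using reach_del_ne[OF x(2)] by simp
qed

lemma S_sub_V: "S u \<subseteq> V"
proof
  fix y assume "y \<in> S u"
  then obtain x where x: "(u, x) \<in> D" "reach (del_vertex_E E u) x y" unfolding S_def by blast
  have "x \<in> V" using D_edge[OF x(1)] edgeV by blast
  then show "y \<in> V" using reach_in_V[OF x(2) del_sub] by blast
qed

lemma S_fin: "finite (S u)" using S_sub_V finV finite_subset by blast

lemma S_closed: "y \<in> S u \<Longrightarrow> reach (del_vertex_E E u) y z \<Longrightarrow> z \<in> S u"
  unfolding S_def by (blast intro: rtrancl_trans)

lemma pw:
  assumes x: "x \<in> V" and y: "y \<in> V" and ne: "x \<noteq> y" and yS: "y \<notin> S x"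
  shows "x \<in> S y"
proof (rule ccontr)
  assume xS: "x \<notin> S y"
  let ?R = "adj_rel E"
  have "\<exists>n. (x, y) \<in> ?R ^^ n" using connD[OF conV x y] rtrancl_power by blast
  define k where "k = (LEAST n. (x, y) \<in> ?R ^^ n)"
  have kin: "(x, y) \<in> ?R ^^ k" unfolding k_def using \<open>\<exists>n. _\<close> by (rule LeastI_ex)
  have kmin: "\<And>n. (x, y) \<in> ?R ^^ n \<Longrightarrow> k \<le> n" unfolding k_def by (rule Least_le)
  obtain f where f0: "f 0 = x" and fk: "f k = y" and fw: "\<forall>i<k. (f i, f (Suc i)) \<in> ?R"
    using kin relpow_fun_conv by metis
  have k1: "1 \<le> k" using f0 fk ne by (cases k) auto
  have fe: "\<forall>i<k. {f i, f (Suc i)} \<in> E" using fw by (simp add: adj_rel_def)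
  have fV: "f i \<in> V" if "i \<le> k" for i
    using reach_in_V[OF _ order_refl x] walk_seg[OF fw, of 0 i] that f0 rtrancl_power by blast
  have notx: "f i \<noteq> x" if "1 \<le> i" "i \<le> k" for i
  proof
    assume "f i = x"
    then have "(x, y) \<in> ?R ^^ (k - i)" using walk_seg[OF fw, of i k] that fk by simp
    then show False using kmin that by fastforce
  qed
  have noty: "f i \<noteq> y" if "i < k" for i
  proof
    assume "f i = y"
    then have "(x, y) \<in> ?R ^^ i" using walk_seg[OF fw, of 0 i] that f0 by simp
    then show False using kmin that by fastforce
  qed
  have noshort: "f i \<noteq> f (Suc (Suc i)) \<and> {f i, f (Suc (Suc i))} \<notin> E" if "Suc (Suc i) \<le> k" for i
  proof
    have a: "(x, f i) \<in> ?R ^^ i" using walk_seg[OF fw, of 0 i] that f0 by simp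
    have b: "(f (Suc (Suc i)), y) \<in> ?R ^^ (k - Suc (Suc i))" using walk_seg[OF fw, of "Suc (Suc i)" k] that fk by simp
    show "f i \<noteq> f (Suc (Suc i))"
    proof
      assume eq: "f i = f (Suc (Suc i))"
      have "(x, y) \<in> ?R ^^ (i + (k - Suc (Suc i)))" using a b eq relpow_add by fastforce
      then show False using kmin that by fastforce
    qed
    show "{f i, f (Suc (Suc i))} \<notin> E"
    proof
      assume "{f i, f (Suc (Suc i))} \<in> E"
      then have "(f i, f (Suc (Suc i))) \<in> ?R ^^ 1" by (simp add: adj_relI)
      then have "(x, y) \<in> ?R ^^ (i + 1 + (k - Suc (Suc i)))" using a b relpow_add by fastforce
      then show False using kmin that by fastforce
    qed
  qed
  have e01: "{f 0, f 1} \<in> E" using fe k1 by simp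
  have a1: "(f 1, f 0) \<in> D"
  proof (rule ccontr)
    assume "(f 1, f 0) \<notin> D"
    then have "(x, f 1) \<in> D" using D_orient[OF e01] f0 by blast
    moreover have "reach (del_vertex_E E x) (f 1) (f k)"
      using path_reach[of 1 k f x E] k1 notx fe by auto
    ultimately have "y \<in> S x" unfolding S_def using fk by blast
    then show False using yS by simp
  qed
  obtain k' where k': "k = Suc k'" using k1 by (cases k) auto
  have ek: "{f k', f k} \<in> E" using fe k' by simp
  have ak: "(f k, f k') \<notin> D"
  proof
    assume "(f k, f k') \<in> D"
    then have "(y, f k') \<in> D" using fk by simp
    moreover have "reach (del_vertex_E E y) (f 0) (f k')"
      using path_reach[of 0 k' f y E] noty fe k' by auto
    then have "reach (del_vertex_E E y) (f k') x" using f0 reach_sym by metis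
    ultimately have "x \<in> S y" unfolding S_def by blast
    then show False using xS by simp
  qed
  obtain i where i: "1 \<le> i" "i < k" "(f i, f (i - 1)) \<in> D" "\<not> (f (Suc i), f (Suc i - 1)) \<in> D"
    using exists_switch[of "\<lambda>i. (f i, f (i - 1)) \<in> D" k] a1 ak k1 k' by auto
  have "(f i, f (Suc i)) \<in> D" using i(4) D_orient[of "f i" "f (Suc i)"] fe i(2) by auto
  moreover note i(3)
  moreover obtain j where j: "i = Suc j" using i(1) by (cases i) auto
  ultimately have "(f (Suc j), f j) \<in> D" "(f (Suc j), f (Suc (Suc j))) \<in> D" by auto
  then have "f j = f (Suc (Suc j)) \<or> {f j, f (Suc (Suc j))} \<in> E" using D_clique by blast
  then show False using noshort[of j] i j by auto
qed

lemma S_min: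
  assumes v0: "v0 \<in> V" "(v0, x0) \<in> D"
    and min: "\<forall>u x. u \<in> V \<and> (u, x) \<in> D \<longrightarrow> card (S v0) \<le> card (S u)"
    and v: "v \<in> V" "(v, x) \<in> D" "v \<noteq> v0"
  shows "v0 \<in> S v"
proof (rule ccontr)
  assume n: "v0 \<notin> S v"
  then have vS: "v \<in> S v0" using pw[OF v(1) v0(1) v(3)] by simp
  have sub: "S v \<subseteq> S v0"
  proof
    fix y assume "y \<in> S v"
    then obtain x' where x': "(v, x') \<in> D" "reach (del_vertex_E E v) x' y" unfolding S_def by blast
    have x'S: "x' \<in> S v" unfolding S_def using x'(1) by blast
    have "z \<in> S v \<and> reach (del_vertex_E E v0) v z" if "reach (del_vertex_E E v) x' z" for z
      using that
    proof (induction rule: rtrancl_induct)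
      case base
      have "{v, x'} \<in> E" using D_edge[OF x'(1)] .
      moreover have "x' \<noteq> v0" using x'S n by auto
      ultimately have "{v, x'} \<in> del_vertex_E E v0" using v(3) by (auto intro: delI)
      then show ?case using x'S by (simp add: adj_relI r_into_rtrancl)
    next
      case (step z z')
      have z'S: "z' \<in> S v" using S_closed step by (meson r_into_rtrancl)
      have "{z, z'} \<in> E" using step(2) del_sub[of E v] by (auto simp: adj_rel_def)
      moreover have "z \<noteq> v0" "z' \<noteq> v0" using step.IH z'S n by auto
      ultimately have "{z, z'} \<in> del_vertex_E E v0" by (auto intro: delI)
      then have "(z, z') \<in> adj_rel (del_vertex_E E v0)" by (rule adj_relI)
      then show ?case using step.IH z'S by (meson rtrancl.rtrancl_into_rtrancl)
    qed
    then have "reach (del_vertex_E E v0) v y" using x'(2) by blast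
    then show "y \<in> S v0" using S_closed[OF vS] by blast
  qed
  have "S v \<subset> S v0" using sub vS S_not_self[of v] by blast
  then have "card (S v) < card (S v0)" using S_fin by (rule psubset_card_mono[rotated])
  then show False using min v by fastforce
qed

definition DB :: "'a set \<times> 'a set set \<Rightarrow> ('a \<times> 'a) set" where
  "DB B = {(x, y). (x, y) \<in> D \<and> {x, y} \<in> snd B}"

lemma DB_op:
  assumes B: "is_block V E B"
  shows "one_perfect (fst B) (snd B) (DB B)"
  unfolding one_perfect_def orientation_def
proof (intro conjI)
  show "\<forall>(x, y)\<in>DB B. {x, y} \<in> snd B" by (auto simp: DB_def)
  show "\<forall>x y. {x, y} \<in> snd B \<longrightarrow> ((x, y) \<in> DB B) = ((y, x) \<notin> DB B)"
  proof (intro allI impI)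
    fix x y assume xy: "{x, y} \<in> snd B"
    then have "{x, y} \<in> E" using block_props(3)[OF B] by blast
    then have o: "(x, y) \<in> D \<longleftrightarrow> (y, x) \<notin> D" by (rule D_orient)
    have i1: "(x, y) \<in> DB B \<longleftrightarrow> (x, y) \<in> D" using xy by (simp add: DB_def)
    have "{y, x} = {x, y}" by (rule insert_commute)
    then have i2: "(y, x) \<in> DB B \<longleftrightarrow> (y, x) \<in> D" using xy by (simp add: DB_def)
    show "((x, y) \<in> DB B) = ((y, x) \<notin> DB B)" using o i1 i2 by simp
  qed
  show "\<forall>v\<in>fst B. \<forall>x y. (v, x) \<in> DB B \<and> (v, y) \<in> DB B \<and> x \<noteq> y \<longrightarrow> {x, y} \<in> snd B"
  proof (intro ballI allI impI)
    fix v x y assume v: "v \<in> fst B" and h: "(v, x) \<in> DB B \<and> (v, y) \<in> DB B \<and> x \<noteq> y"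
    then have "{x, y} \<in> E" using D_clique by (auto simp: DB_def)
    moreover have "x \<in> fst B" "y \<in> fst B" using h block_props(1)[OF B] by (auto simp: DB_def graph_def)
    ultimately show "{x, y} \<in> snd B" using block_induced[OF B] by blast
  qed
qed

lemma forward_cond:
  "\<exists>Br. is_block V E Br \<and> one_perfectly_orientable (fst Br) (snd Br) \<and>
        (\<forall>B v. is_block V E B \<and> cut_vertex V E v \<and>
           rooted_arc (block_tree V E) (Inl Br) (Inl B) (Inr v)
           \<longrightarrow> rooted_one_perfectly_orientable (fst B) (snd B) v)"
proof -
  have "\<exists>u x. u \<in> V \<and> (u, x) \<in> D"
  proof -
    obtain a where a: "a \<in> V" using con by (auto simp: connected_graph_def)
    obtain b where e: "{a, b} \<in> E" using has_edge[OF a] by blast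
    then have "(a, b) \<in> D \<or> (b, a) \<in> D" using D_orient by blast
    then show ?thesis using e edgeV by blast
  qed
  then have exn: "\<exists>n. \<exists>u x. u \<in> V \<and> (u, x) \<in> D \<and> card (S u) = n" by blast
  define n0 where "n0 = (LEAST n. \<exists>u x. u \<in> V \<and> (u, x) \<in> D \<and> card (S u) = n)"
  obtain v0 x0 where v0: "v0 \<in> V" "(v0, x0) \<in> D" "card (S v0) = n0"
    using LeastI_ex[OF exn] unfolding n0_def[symmetric] by blast
  have min: "\<forall>u x. u \<in> V \<and> (u, x) \<in> D \<longrightarrow> card (S v0) \<le> card (S u)"
    using v0(3) unfolding n0_def by (metis (mono_tags, lifting) Least_le)
  have e0: "{v0, x0} \<in> E" using D_edge[OF v0(2)] .
  obtain B0 where B0: "is_block V E B0" "{v0, x0} \<in> snd B0" using block_exists[OF e0] by blast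
  have v0B: "v0 \<in> fst B0" "x0 \<in> fst B0" using B0 block_props(1)[OF B0(1)] by (auto simp: graph_def)
  have x0v0: "x0 \<noteq> v0" using edgeV[OF e0] by auto
  have "rooted_one_perfectly_orientable (fst B) (snd B) v"
    if h: "is_block V E B" "cut_vertex V E v" "rooted_arc (block_tree V E) (Inl B0) (Inl B) (Inr v)" for B v
  proof -
    have arc: "(Inl B, Inr v) \<in> R" "dist (Inr v) (Inl B0) < dist (Inl B) (Inl B0)"
      using h(3) unfolding rooted_arc_def by auto
    have vB: "v \<in> fst B" using arc(1) R_Inl_Inr by simp
    have sink: "\<forall>x. (v, x) \<notin> DB B"
    proof (intro allI notI)
      fix x assume "(v, x) \<in> DB B"
      then have vx: "(v, x) \<in> D" "{v, x} \<in> snd B" by (auto simp: DB_def)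
      have xB: "x \<in> fst B" using vx(2) block_props(1)[OF h(1)] by (auto simp: graph_def)
      have xv: "x \<noteq> v" using D_edge[OF vx(1)] edgeV by blast
      have xS: "x \<in> S v" unfolding S_def using vx(1) by blast
      have vV: "v \<in> V" using h(2) cutc by blast
      show False
      proof (cases "v = v0")
        case True
        have "x0 \<in> S v" unfolding S_def using v0(2) True by blast
        then have "reach (del_vertex_E E v) x x0" using S_conn xS by blast
        then show False using forward_key[OF h(2) h(1) vB B0(1) arc(2) _ _ xB xv] v0B x0v0 True by blast
      next
        case False
        have "v0 \<in> S v" using S_min[OF v0(1,2) min vV vx(1) False] .
        then have "reach (del_vertex_E E v) x v0" using S_conn xS by blast
        then show False using forward_key[OF h(2) h(1) vB B0(1) arc(2) _ _ xB xv] v0B False by blast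
      qed
    qed
    show ?thesis unfolding rooted_one_perfectly_orientable_def using vB DB_op[OF h(1)] sink by blast
  qed
  moreover have "one_perfectly_orientable (fst B0) (snd B0)"
    unfolding one_perfectly_orientable_def using DB_op[OF B0(1)] by blast
  ultimately show ?thesis using B0(1) by blast
qed

end

end




lemma op_arc: "one_perfect V' E' D \<Longrightarrow> (x, y) \<in> D \<Longrightarrow> {x, y} \<in> E'"
  by (auto simp: one_perfect_def orientation_def)

lemma op_orient: "one_perfect V' E' D \<Longrightarrow> {x, y} \<in> E' \<Longrightarrow> (x, y) \<in> D \<longleftrightarrow> (y, x) \<notin> D"
  by (auto simp: one_perfect_def orientation_def)

lemma op_clique: "one_perfect V' E' D \<Longrightarrow> v \<in> V' \<Longrightarrow> (v, x) \<in> D \<Longrightarrow> (v, y) \<in> D \<Longrightarrow> x \<noteq> y \<Longrightarrow> {x, y} \<in> E'"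
  by (auto simp: one_perfect_def)

context G begin

lemma arc_iff: "rooted_arc (block_tree V E) r (Inl B) (Inr v) \<longleftrightarrow> (Inl B, Inr v) \<in> R \<and> dist (Inr v) r < dist (Inl B) r"
  by (simp add: rooted_arc_def)

lemma backward:
  assumes r: "r \<in> N"
    and H: "\<forall>B v. is_block V E B \<and> cut_vertex V E v \<and> rooted_arc (block_tree V E) r (Inl B) (Inr v)
           \<longrightarrow> rooted_one_perfectly_orientable (fst B) (snd B) v"
    and Hr: "\<forall>B. r = Inl B \<longrightarrow> one_perfectly_orientable (fst B) (snd B)"
  shows "one_perfectly_orientable V E"
proof -
  define P where "P = (\<lambda>B D. one_perfect (fst B) (snd B) D \<and>
     (\<forall>v. cut_vertex V E v \<and> rooted_arc (block_tree V E) r (Inl B) (Inr v) \<longrightarrow> (\<forall>x. (v, x) \<notin> D)))"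
  have exD: "\<exists>D. P B D" if B: "is_block V E B" for B
  proof (cases "\<exists>v. cut_vertex V E v \<and> rooted_arc (block_tree V E) r (Inl B) (Inr v)")
    case True
    then obtain v where v: "cut_vertex V E v" "rooted_arc (block_tree V E) r (Inl B) (Inr v)" by blast
    have "rooted_one_perfectly_orientable (fst B) (snd B) v" using H B v by blast
    then obtain D where D: "one_perfect (fst B) (snd B) D" "\<forall>x. (v, x) \<notin> D"
      unfolding rooted_one_perfectly_orientable_def by blast
    have "\<forall>v'. cut_vertex V E v' \<and> rooted_arc (block_tree V E) r (Inl B) (Inr v') \<longrightarrow> (\<forall>x. (v', x) \<notin> D)"
    proof (rule allI, rule impI)
      fix v' assume v': "cut_vertex V E v' \<and> rooted_arc (block_tree V E) r (Inl B) (Inr v')"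
      have a1: "v \<in> fst B" "dist (Inr v) r < dist (Inl B) r" using v(2) arc_iff R_Inl_Inr by auto
      have a2: "v' \<in> fst B" "dist (Inr v') r < dist (Inl B) r" using v' arc_iff R_Inl_Inr by auto
      have "v = v'" using oneparent[OF B v(1) _ a1(1) a2(1) r a1(2) a2(2)] v' by blast
      then show "\<forall>x. (v', x) \<notin> D" using D(2) by simp
    qed
    then show ?thesis using D(1) unfolding P_def by blast
  next
    case False
    have "one_perfectly_orientable (fst B) (snd B)"
    proof (cases "r = Inl B")
      case True then show ?thesis using Hr by blast
    next
      case rB: False
      have BN: "Inl B \<in> N" using B N_Inl by simp
      define n where "n = dist (Inl B) r"
      have Br: "(Inl B, r) \<in> R ^^ n" unfolding n_def by (rule dist_ok[OF BN r])
      have "n \<noteq> 0" using Br rB by (cases n) auto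
      then obtain n' where n': "n = Suc n'" by (cases n) auto
      obtain t1 where t1: "(Inl B, t1) \<in> R" "(t1, r) \<in> R ^^ n'" using Br[unfolded n'] by (rule relpow_Suc_E2)
      obtain w where w: "t1 = Inr w" "cut_vertex V E w" "w \<in> fst B" using t1(1) unfolding R_iff by auto
      have "dist (Inr w) r \<le> n'" using dist_le t1(2) w(1) by simp
      then have "rooted_arc (block_tree V E) r (Inl B) (Inr w)"
        using arc_iff t1(1) w(1) n' n_def by simp
      then show ?thesis using False w(2) by blast
    qed
    then show ?thesis unfolding P_def one_perfectly_orientable_def using False by blast
  qed
  define DBs where "DBs = (\<lambda>B. SOME D. P B D)"
  have PB: "P B (DBs B)" if "is_block V E B" for B
    unfolding DBs_def using exD[OF that] by (rule someI_ex)
  have opB: "one_perfect (fst B) (snd B) (DBs B)" if "is_block V E B" for B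
    using PB[OF that] by (simp add: P_def)
  define DD where "DD = {p. \<exists>B. is_block V E B \<and> p \<in> DBs B}"
  have DDE: "\<And>x y. (x, y) \<in> DD \<Longrightarrow> \<exists>B. is_block V E B \<and> (x, y) \<in> DBs B \<and> {x, y} \<in> snd B"
  proof -
    fix x y assume "(x, y) \<in> DD"
    then obtain B where B: "is_block V E B" "(x, y) \<in> DBs B" unfolding DD_def by blast
    then have "{x, y} \<in> snd B" using op_arc[OF opB[OF B(1)] B(2)] by simp
    then show "\<exists>B. is_block V E B \<and> (x, y) \<in> DBs B \<and> {x, y} \<in> snd B" using B by blast
  qed
  have "one_perfect V E DD"
    unfolding one_perfect_def orientation_def
  proof (intro conjI)
    show "\<forall>(x, y)\<in>DD. {x, y} \<in> E"
    proof (intro ballI, clarify)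
      fix x y assume "(x, y) \<in> DD"
      then obtain B where "is_block V E B" "{x, y} \<in> snd B" using DDE by blast
      then show "{x, y} \<in> E" using block_props(3) by blast
    qed
    show "\<forall>x y. {x, y} \<in> E \<longrightarrow> ((x, y) \<in> DD) = ((y, x) \<notin> DD)"
    proof (intro allI impI)
      fix x y assume e: "{x, y} \<in> E"
      obtain B0 where B0: "is_block V E B0" "{x, y} \<in> snd B0" using block_exists[OF e] by blast
      have i1: "(x, y) \<in> DD \<longleftrightarrow> (x, y) \<in> DBs B0"
      proof
        assume "(x, y) \<in> DD"
        then obtain B where B: "is_block V E B" "(x, y) \<in> DBs B" "{x, y} \<in> snd B" using DDE by blast
        then have "B = B0" using edge_unique[OF B(1) B0(1) B(3) B0(2)] by simp
        then show "(x, y) \<in> DBs B0" using B by simp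
      next
        assume "(x, y) \<in> DBs B0" then show "(x, y) \<in> DD" unfolding DD_def using B0 by blast
      qed
      have B0': "{y, x} \<in> snd B0" using B0(2) by (simp add: insert_commute)
      have i2: "(y, x) \<in> DD \<longleftrightarrow> (y, x) \<in> DBs B0"
      proof
        assume "(y, x) \<in> DD"
        then obtain B where B: "is_block V E B" "(y, x) \<in> DBs B" "{y, x} \<in> snd B" using DDE by blast
        then have "B = B0" using edge_unique[OF B(1) B0(1) B(3) B0'] by simp
        then show "(y, x) \<in> DBs B0" using B by simp
      next
        assume "(y, x) \<in> DBs B0" then show "(y, x) \<in> DD" unfolding DD_def using B0 by blast
      qed
      show "((x, y) \<in> DD) = ((y, x) \<notin> DD)" using i1 i2 op_orient[OF opB[OF B0(1)] B0(2)] by simp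
    qed
    show "\<forall>v\<in>V. \<forall>x y. (v, x) \<in> DD \<and> (v, y) \<in> DD \<and> x \<noteq> y \<longrightarrow> {x, y} \<in> E"
    proof (intro ballI allI impI)
      fix u x y assume u: "u \<in> V" and h: "(u, x) \<in> DD \<and> (u, y) \<in> DD \<and> x \<noteq> y"
      obtain B1 where B1: "is_block V E B1" "(u, x) \<in> DBs B1" "{u, x} \<in> snd B1" using DDE h by blast
      obtain B2 where B2: "is_block V E B2" "(u, y) \<in> DBs B2" "{u, y} \<in> snd B2" using DDE h by blast
      have uB1: "u \<in> fst B1" using B1(3) block_props(1)[OF B1(1)] by (auto simp: graph_def)
      have uB2: "u \<in> fst B2" using B2(3) block_props(1)[OF B2(1)] by (auto simp: graph_def)
      show "{x, y} \<in> E"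
      proof (cases "B1 = B2")
        case True
        then have "{x, y} \<in> snd B1" using op_clique[OF opB[OF B1(1)] uB1 B1(2)] B2(2) h by blast
        then show ?thesis using block_props(3)[OF B1(1)] by blast
      next
        case False
        have cu: "cut_vertex V E u" using two_blocks_cut[OF B1(1) B2(1) False uB1 uB2] .
        have sinkarc: "False" if Bi: "is_block V E Bi" "u \<in> fst Bi" "(u, z) \<in> DBs Bi"
          "dist (Inr u) r < dist (Inl Bi) r" for Bi z
        proof -
          have "rooted_arc (block_tree V E) r (Inl Bi) (Inr u)"
            using arc_iff R_Inl_Inr Bi cu by simp
          then show False using PB[OF Bi(1)] cu Bi(3) unfolding P_def by blast
        qed
        show ?thesis
        proof (cases "dist (Inl B1) r \<le> dist (Inr u) r \<and> dist (Inl B2) r \<le> dist (Inr u) r")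
          case True
          then have "B1 = B2" using nonchild[OF cu B1(1) B2(1) uB1 uB2 r] by blast
          then show ?thesis using False by simp
        next
          case nc: False
          have n1: "\<not> dist (Inr u) r < dist (Inl B1) r" using sinkarc[OF B1(1) uB1 B1(2)] by blast
          have n2: "\<not> dist (Inr u) r < dist (Inl B2) r" using sinkarc[OF B2(1) uB2 B2(2)] by blast
          have False using nc n1 n2 by linarith
          then show ?thesis by simp
        qed
      qed
    qed
  qed
  then show ?thesis unfolding one_perfectly_orientable_def by blast
qed

end

theorem theorem3p2:
  fixes V :: "'a set" and E :: "'a set set"
  assumes "graph V E" and "connected_graph V E" and "\<exists>v. cut_vertex V E v"
  shows "one_perfectly_orientable V E \<longleftrightarrow>
    ((\<exists>Br. is_block V E Br \<and> one_perfectly_orientable (fst Br) (snd Br) \<and>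
        (\<forall>B v. is_block V E B \<and> cut_vertex V E v \<and>
           rooted_arc (block_tree V E) (Inl Br) (Inl B) (Inr v)
           \<longrightarrow> rooted_one_perfectly_orientable (fst B) (snd B) v))
     \<or>
     (\<exists>vr. cut_vertex V E vr \<and>
        (\<forall>B v. is_block V E B \<and> cut_vertex V E v \<and>
           rooted_arc (block_tree V E) (Inr vr) (Inl B) (Inr v)
           \<longrightarrow> rooted_one_perfectly_orientable (fst B) (snd B) v)))"
proof -
  interpret G V E using assms by unfold_locales
  show ?thesis
  proof
    assume "one_perfectly_orientable V E"
    then obtain D where "one_perfect V E D" unfolding one_perfectly_orientable_def by blast
    then show "(\<exists>Br. is_block V E Br \<and> one_perfectly_orientable (fst Br) (snd Br) \<and>
        (\<forall>B v. is_block V E B \<and> cut_vertex V E v \<and>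
           rooted_arc (block_tree V E) (Inl Br) (Inl B) (Inr v)
           \<longrightarrow> rooted_one_perfectly_orientable (fst B) (snd B) v))
     \<or>
     (\<exists>vr. cut_vertex V E vr \<and>
        (\<forall>B v. is_block V E B \<and> cut_vertex V E v \<and>
           rooted_arc (block_tree V E) (Inr vr) (Inl B) (Inr v)
           \<longrightarrow> rooted_one_perfectly_orientable (fst B) (snd B) v))"
      using forward_cond by blast
  next
    assume "(\<exists>Br. is_block V E Br \<and> one_perfectly_orientable (fst Br) (snd Br) \<and>
        (\<forall>B v. is_block V E B \<and> cut_vertex V E v \<and>
           rooted_arc (block_tree V E) (Inl Br) (Inl B) (Inr v)
           \<longrightarrow> rooted_one_perfectly_orientable (fst B) (snd B) v))
     \<or>
     (\<exists>vr. cut_vertex V E vr \<and>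
        (\<forall>B v. is_block V E B \<and> cut_vertex V E v \<and>
           rooted_arc (block_tree V E) (Inr vr) (Inl B) (Inr v)
           \<longrightarrow> rooted_one_perfectly_orientable (fst B) (snd B) v))"
    then show "one_perfectly_orientable V E"
    proof
      assume "\<exists>Br. is_block V E Br \<and> one_perfectly_orientable (fst Br) (snd Br) \<and>
        (\<forall>B v. is_block V E B \<and> cut_vertex V E v \<and>
           rooted_arc (block_tree V E) (Inl Br) (Inl B) (Inr v)
           \<longrightarrow> rooted_one_perfectly_orientable (fst B) (snd B) v)"
      then obtain Br where Br: "is_block V E Br" "one_perfectly_orientable (fst Br) (snd Br)"
        "\<forall>B v. is_block V E B \<and> cut_vertex V E v \<and>
           rooted_arc (block_tree V E) (Inl Br) (Inl B) (Inr v)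
           \<longrightarrow> rooted_one_perfectly_orientable (fst B) (snd B) v" by blast
      have "Inl Br \<in> N" using Br(1) N_Inl by simp
      then show ?thesis using backward[OF _ Br(3)] Br(2) by blast
    next
      assume "\<exists>vr. cut_vertex V E vr \<and>
        (\<forall>B v. is_block V E B \<and> cut_vertex V E v \<and>
           rooted_arc (block_tree V E) (Inr vr) (Inl B) (Inr v)
           \<longrightarrow> rooted_one_perfectly_orientable (fst B) (snd B) v)"
      then obtain vr where vr: "cut_vertex V E vr"
        "\<forall>B v. is_block V E B \<and> cut_vertex V E v \<and>
           rooted_arc (block_tree V E) (Inr vr) (Inl B) (Inr v)
           \<longrightarrow> rooted_one_perfectly_orientable (fst B) (snd B) v" by blast
      have "Inr vr \<in> N" using vr(1) N_Inr by simp
      then show ?thesis using backward[OF _ vr(2)] by blast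
    qed
  qed
qed



end
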